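(* For any circular interval graph $G$ and any vertex $v$ of $G$, $\deg_{G^2}(v)\le 4\omega(G)-4$.
   Context: A circular interval graph is obtained by taking a circle $\Sigma$, intervals $F_1,\dots,F_k\subseteq\Sigma$ each homeomorphic to $[0,1]$, a finite set of points of $\Sigma$ as vertex set, and joining two points iff both lie in some $F_i$. $G^2$ is the graph on $V(G)$ with distinct vertices adjacent iff at distance at most $2$ in $G$. $\omega$ is the clique number. *)

theory Defs
  imports "HOL-Analysis.Analysis"
begin

text \<open>Circular interval graph: circle = sphere c r (r > 0) in the plane (complex numbers),
  intervals F 0, ..., F (k-1) subsets of the circle each homeomorphic to [0,1],
  vertex set V a finite set of points of the circle; distinct u, v adjacent iff
  both lie in some F i.\<close>

definition circ_interval_adj :: "(nat \<Rightarrow> complex set) \<Rightarrow> nat \<Rightarrow> complex \<Rightarrow> complex \<Rightarrow> bool" where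
  "circ_interval_adj F k u v \<longleftrightarrow> u \<noteq> v \<and> (\<exists>i<k. u \<in> F i \<and> v \<in> F i)"

definition clique_number :: "'a set \<Rightarrow> ('a \<Rightarrow> 'a \<Rightarrow> bool) \<Rightarrow> nat" where
  "clique_number V E = Max {card C | C. C \<subseteq> V \<and> (\<forall>x\<in>C. \<forall>y\<in>C. x \<noteq> y \<longrightarrow> E x y)}"

definition square_degree :: "'a set \<Rightarrow> ('a \<Rightarrow> 'a \<Rightarrow> bool) \<Rightarrow> 'a \<Rightarrow> nat" where
  "square_degree V E v = card {w \<in> V. w \<noteq> v \<and> (E v w \<or> (\<exists>u\<in>V. E v u \<and> E u w))}"

end

theory Submission
  imports Defs
begin


lemma trig_id:
  fixes t b d :: real
  shows "(sin t - sin b) * (cos d - cos b) - (cos t - cos b) * (sin d - sin b)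
     = -4 * sin ((t-d)/2) * sin ((b-t)/2) * sin ((d-b)/2)"
proof -
  define A where "A = t/2" define B where "B = b/2" define D where "D = d/2"
  have t: "t = 2*A" and b: "b = 2*B" and d: "d = 2*D" by (auto simp: A_def B_def D_def)
  have h1: "(t-d)/2 = A - D" "(b-t)/2 = B - A" "(d-b)/2 = D - B" by (auto simp: t b d)
  show ?thesis unfolding h1 unfolding t b d sin_double cos_double sin_diff cos_diff
    using sin_cos_squared_add[of A] sin_cos_squared_add[of B] sin_cos_squared_add[of D]
    by algebra
qed

definition G :: "real \<Rightarrow> real \<Rightarrow> real \<Rightarrow> real" where
  "G t b d = (sin t - sin b) * (cos d - cos b) - (cos t - cos b) * (sin d - sin b)"

lemma sin_neg_lt: "-pi < x \<Longrightarrow> x < 0 \<Longrightarrow> sin x < 0"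
  using sin_gt_zero[of "-x"] by simp

lemma G_pos:
  assumes "-pi < b" "b < d" "d \<le> pi" "-pi < t" "t \<le> pi" "t < b \<or> d < t"
  shows "G t b d > 0"
proof -
  have s3: "sin ((d-b)/2) > 0" using assms by (intro sin_gt_zero) auto
  show ?thesis using assms(6)
  proof
    assume "t < b"
    have "sin ((t-d)/2) < 0" using assms \<open>t<b\<close> by (intro sin_neg_lt) auto
    moreover have "sin ((b-t)/2) > 0" using assms \<open>t<b\<close> by (intro sin_gt_zero) auto
    ultimately show ?thesis using s3 unfolding G_def trig_id
      by (simp add: mult_pos_neg mult_neg_pos mult_neg_neg)
  next
    assume "d < t"
    have "sin ((t-d)/2) > 0" using assms \<open>d<t\<close> by (intro sin_gt_zero) auto
    moreover have "sin ((b-t)/2) < 0" using assms \<open>d<t\<close> by (intro sin_neg_lt) auto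
    ultimately show ?thesis using s3 unfolding G_def trig_id
      by (simp add: mult_pos_neg mult_neg_pos mult_neg_neg)
  qed
qed

lemma G_neg:
  assumes "-pi < b" "b < t" "t < d" "d \<le> pi"
  shows "G t b d < 0"
proof -
  have s3: "sin ((d-b)/2) > 0" using assms by (intro sin_gt_zero) auto
  have "sin ((t-d)/2) < 0" using assms by (intro sin_neg_lt) auto
  moreover have "sin ((b-t)/2) < 0" using assms by (intro sin_neg_lt) auto
  ultimately show ?thesis using s3 unfolding G_def trig_id
    by (simp add: mult_pos_neg mult_neg_pos mult_neg_neg mult_pos_pos)
qed

definition ang :: "complex \<Rightarrow> complex \<Rightarrow> complex \<Rightarrow> real" where
  "ang c v w = Arg (-(w-c)/(v-c))"

lemma ang_rep:
  assumes "r > 0" "v \<in> sphere c r" "w \<in> sphere c r"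
  shows "w = c - (v-c) * exp (\<i> * of_real (ang c v w))"
proof -
  define z where "z = -(w-c)/(v-c)"
  have nv: "norm (v-c) = r" "norm (w-c) = r" using assms by (auto simp: dist_norm norm_minus_commute)
  have vc: "v - c \<noteq> 0" using nv assms(1) by auto
  have nz: "norm z = 1" using nv assms(1) using norm_minus_commute[of c w] by (simp add: z_def norm_divide)
  hence "z \<noteq> 0" by auto
  from Arg_eq[OF this] nz have "z = exp (\<i> * of_real (Arg z))" by simp
  hence "-(w-c) = (v-c) * exp (\<i> * of_real (ang c v w))"
    using vc by (simp add: z_def ang_def field_simps)
  thus ?thesis by (simp add: algebra_simps)
qed

lemma ang_inj:
  assumes "r > 0" "v \<in> sphere c r" "w \<in> sphere c r" "x \<in> sphere c r" "ang c v w = ang c v x"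
  shows "w = x"
  using ang_rep[OF assms(1,2,3)] ang_rep[OF assms(1,2,4)] assms(5) by metis

lemma ang_bounds: "-pi < ang c v w" "ang c v w \<le> pi"
  unfolding ang_def by (rule mpi_less_Arg, rule Arg_le_pi)

lemma ang_self: "v \<noteq> c \<Longrightarrow> ang c v v = pi"
proof -
  assume "v \<noteq> c"
  hence "v - c \<noteq> 0" by simp
  hence "-(v-c)/(v-c) = of_real (-1)" by (simp add: field_simps)
  thus ?thesis unfolding ang_def by (metis Arg_of_real neg_less_0_iff_less zero_less_one)
qed

lemma f_formula:
  assumes "r > 0" "v \<in> sphere c r" "w \<in> sphere c r" "p \<in> sphere c r" "q \<in> sphere c r"
  shows "Im ((w-p) * cnj (q-p)) = r^2 * G (ang c v w) (ang c v p) (ang c v q)"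
proof -
  define t where "t = ang c v w" define b where "b = ang c v p" define d where "d = ang c v q"
  have nv: "norm (v-c) = r" using assms by (auto simp: dist_norm norm_minus_commute)
  have e1: "w - p = -(v-c) * (exp (\<i> * of_real t) - exp (\<i> * of_real b))"
    using ang_rep[OF assms(1,2,3)] ang_rep[OF assms(1,2,4)] unfolding t_def b_def
    by (metis (no_types, lifting) add_diff_cancel_left' diff_diff_eq2 minus_diff_eq
        mult_minus_left right_diff_distrib')
  have e2: "q - p = -(v-c) * (exp (\<i> * of_real d) - exp (\<i> * of_real b))"
    using ang_rep[OF assms(1,2,5)] ang_rep[OF assms(1,2,4)] unfolding d_def b_def
    by (metis (no_types, lifting) add_diff_cancel_left' diff_diff_eq2 minus_diff_eq
        mult_minus_left right_diff_distrib')
  have "(w-p) * cnj (q-p) = ((v-c) * cnj (v-c)) *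
      ((exp (\<i> * of_real t) - exp (\<i> * of_real b)) * cnj (exp (\<i> * of_real d) - exp (\<i> * of_real b)))"
    unfolding e1 e2 by (simp add: algebra_simps)
  also have "(v-c) * cnj (v-c) = of_real (r^2)"
    by (metis complex_norm_square nv of_real_power)
  finally have "Im ((w-p) * cnj (q-p)) = r^2 * Im ((exp (\<i> * of_real t) - exp (\<i> * of_real b)) * cnj (exp (\<i> * of_real d) - exp (\<i> * of_real b)))"
    by simp
  also have "Im ((exp (\<i> * of_real t) - exp (\<i> * of_real b)) * cnj (exp (\<i> * of_real d) - exp (\<i> * of_real b))) = G t b d"
    unfolding G_def by (simp add: Re_exp Im_exp algebra_simps)
  finally show ?thesis by (simp add: t_def b_def d_def)
qed

lemma sep:
  assumes r: "r > 0" and v: "v \<in> sphere c r" and Fs: "F \<subseteq> sphere c r" and con: "connected F"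
    and pq: "p \<in> sphere c r" "q \<in> sphere c r" "p \<notin> F" "q \<notin> F"
    and xy: "x \<in> F" "y \<in> F"
    and o1: "ang c v p < ang c v x" "ang c v x < ang c v q"
    and o2: "ang c v y < ang c v p \<or> ang c v q < ang c v y"
  shows False
proof -
  define f where "f = (\<lambda>w. Im ((w-p) * cnj (q-p)))"
  have cf: "continuous_on F f" unfolding f_def by (intro continuous_intros)
  have cfF: "connected (f ` F)" by (rule connected_continuous_image[OF cf con])
  have xs: "x \<in> sphere c r" and ys: "y \<in> sphere c r" using xy Fs by auto
  have "f x < 0" unfolding f_def f_formula[OF r v xs pq(1,2)]
    using G_neg[of "ang c v p" "ang c v x" "ang c v q"] o1 ang_bounds r
    by (simp add: mult_pos_neg)
  moreover have "f y > 0" unfolding f_def f_formula[OF r v ys pq(1,2)]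
    using G_pos[of "ang c v p" "ang c v q" "ang c v y"] o1 o2 ang_bounds r
    by simp
  ultimately have "0 \<in> f ` F" using cfF xy unfolding connected_iff_interval
    by (meson imageI less_imp_le)
  then obtain w where w: "w \<in> F" "f w = 0" by auto
  have ws: "w \<in> sphere c r" using w Fs by auto
  have "w \<noteq> p" "w \<noteq> q" using w pq by auto
  hence "ang c v w \<noteq> ang c v p" "ang c v w \<noteq> ang c v q" using ang_inj[OF r v ws] pq by auto
  hence "ang c v w < ang c v p \<or> ang c v q < ang c v w \<or> (ang c v p < ang c v w \<and> ang c v w < ang c v q)"
    by auto
  hence "G (ang c v w) (ang c v p) (ang c v q) \<noteq> 0"
    using G_pos[of "ang c v p" "ang c v q" "ang c v w"] G_neg[of "ang c v p" "ang c v w" "ang c v q"]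
      o1 ang_bounds[of c v] by (metis less_irrefl order.strict_trans)
  moreover have "G (ang c v w) (ang c v p) (ang c v q) = 0"
    using w(2) f_formula[OF r v ws pq(1,2)] r unfolding f_def by simp
  ultimately show False by simp
qed



lemma clique_bound:
  assumes fin: "finite V" and CV: "C \<subseteq> V" and i: "i < k" and CS: "C \<subseteq> S i"
    and E: "E = (\<lambda>x y. x \<noteq> y \<and> (\<exists>i<k. x \<in> S i \<and> y \<in> S i))"
  shows "card C \<le> clique_number V E"
proof -
  have fs: "finite {card C | C. C \<subseteq> V \<and> (\<forall>x\<in>C. \<forall>y\<in>C. x \<noteq> y \<longrightarrow> E x y)}"
  proof (rule finite_subset[of _ "card ` Pow V"])
    show "{card C | C. C \<subseteq> V \<and> (\<forall>x\<in>C. \<forall>y\<in>C. x \<noteq> y \<longrightarrow> E x y)} \<subseteq> card ` Pow V" by auto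
  qed (use fin in auto)
  have "card C \<in> {card C | C. C \<subseteq> V \<and> (\<forall>x\<in>C. \<forall>y\<in>C. x \<noteq> y \<longrightarrow> E x y)}"
    using CV CS i unfolding E by blast
  thus ?thesis unfolding clique_number_def using fs by (rule Max_ge[rotated])
qed

lemma part_bound:
  assumes fin: "finite V" and XV: "X \<subseteq> V" and yV: "y \<in> V" and yX: "y \<notin> X"
    and i: "i < k" and XS: "insert y X \<subseteq> S i"
    and E: "E = (\<lambda>x y. x \<noteq> y \<and> (\<exists>i<k. x \<in> S i \<and> y \<in> S i))"
  shows "card X \<le> clique_number V E - 1"
proof -
  have "card (insert y X) \<le> clique_number V E"
    using clique_bound[OF fin _ i XS E] XV yV by auto
  moreover have "finite X" using fin XV finite_subset by auto
  ultimately show ?thesis using yX by simp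
qed

lemma comb:
  fixes V :: "'a set" and h :: "'a \<Rightarrow> real" and S :: "nat \<Rightarrow> 'a set"
  assumes fin: "finite V" and vV: "v \<in> V" and vmin: "\<And>w. w \<in> V \<Longrightarrow> w \<noteq> v \<Longrightarrow> h v < h w"
    and inj: "inj_on h V"
    and NA1: "\<And>i a b c d. i<k \<Longrightarrow> a\<in>V \<Longrightarrow> b\<in>V \<Longrightarrow> c\<in>V \<Longrightarrow> d\<in>V \<Longrightarrow> h a < h b \<Longrightarrow> h b < h c
       \<Longrightarrow> h c < h d \<Longrightarrow> a \<in> S i \<Longrightarrow> c \<in> S i \<Longrightarrow> b \<notin> S i \<Longrightarrow> d \<notin> S i \<Longrightarrow> False"
    and NA2: "\<And>i a b c d. i<k \<Longrightarrow> a\<in>V \<Longrightarrow> b\<in>V \<Longrightarrow> c\<in>V \<Longrightarrow> d\<in>V \<Longrightarrow> h a < h b \<Longrightarrow> h b < h c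
       \<Longrightarrow> h c < h d \<Longrightarrow> b \<in> S i \<Longrightarrow> d \<in> S i \<Longrightarrow> a \<notin> S i \<Longrightarrow> c \<notin> S i \<Longrightarrow> False"
    and E: "E = (\<lambda>x y. x \<noteq> y \<and> (\<exists>i<k. x \<in> S i \<and> y \<in> S i))"
  shows "square_degree V E v \<le> 4 * clique_number V E - 4"
proof -
  define \<omega> where "\<omega> = clique_number V E"
  have injD: "\<And>x y. x \<in> V \<Longrightarrow> y \<in> V \<Longrightarrow> h x = h y \<Longrightarrow> x = y" by (rule inj_onD[OF inj])
  define X1 where "X1 = {w\<in>V. w\<noteq>v \<and> (\<exists>i<k. v \<in> S i \<and> (\<forall>z\<in>V. h z \<le> h w \<longrightarrow> z \<in> S i))}"
  define X2 where "X2 = {w\<in>V. w\<noteq>v \<and> (\<exists>i<k. v \<in> S i \<and> (\<forall>z\<in>V. h w \<le> h z \<longrightarrow> z \<in> S i))}"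
  define X3 where "X3 = {w\<in>V. w\<noteq>v \<and> w \<notin> X1 \<and> (\<exists>j<k. \<exists>u\<in>X1. h u \<le> h w \<and>
       (\<forall>z\<in>V. h u \<le> h z \<and> h z \<le> h w \<longrightarrow> z \<in> S j))}"
  define X4 where "X4 = {w\<in>V. w\<noteq>v \<and> w \<notin> X2 \<and> (\<exists>j<k. \<exists>u\<in>X2. h w \<le> h u \<and>
       (\<forall>z\<in>V. h w \<le> h z \<and> h z \<le> h u \<longrightarrow> z \<in> S j))}"
  have sub: "X1 \<subseteq> V" "X2 \<subseteq> V" "X3 \<subseteq> V" "X4 \<subseteq> V" unfolding X1_def X2_def X3_def X4_def by auto
  have finX: "finite X1" "finite X2" "finite X3" "finite X4" using sub fin finite_subset by blast+
  have X1max: "\<exists>m\<in>X1. \<forall>x\<in>X1. h x \<le> h m" if "X1 \<noteq> {}"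
  proof -
    have "Max (h ` X1) \<in> h ` X1" using finX that by auto
    then obtain m where "m \<in> X1" "h m = Max (h ` X1)" by auto
    thus ?thesis using finX(1) by (metis Max_ge finite_imageI imageI)
  qed
  have X2min: "\<exists>m\<in>X2. \<forall>x\<in>X2. h m \<le> h x" if "X2 \<noteq> {}"
  proof -
    have "Min (h ` X2) \<in> h ` X2" using finX that by auto
    then obtain m where "m \<in> X2" "h m = Min (h ` X2)" by auto
    thus ?thesis using finX(2) by (metis Min_le finite_imageI imageI)
  qed
  have b1: "card X1 \<le> \<omega> - 1"
  proof (cases "X1 = {}")
    case False
    then obtain m where m: "m \<in> X1" "\<forall>x\<in>X1. h x \<le> h m" using X1max by blast
    then obtain i where i: "i<k" "v \<in> S i" "\<forall>z\<in>V. h z \<le> h m \<longrightarrow> z \<in> S i" unfolding X1_def by auto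
    have "insert v X1 \<subseteq> S i" using i m sub by auto
    thus ?thesis unfolding \<omega>_def using part_bound[OF fin sub(1) vV _ i(1) _ E] X1_def by auto
  qed simp
  have b2: "card X2 \<le> \<omega> - 1"
  proof (cases "X2 = {}")
    case False
    then obtain m where m: "m \<in> X2" "\<forall>x\<in>X2. h m \<le> h x" using X2min by blast
    then obtain i where i: "i<k" "v \<in> S i" "\<forall>z\<in>V. h m \<le> h z \<longrightarrow> z \<in> S i" unfolding X2_def by auto
    have "insert v X2 \<subseteq> S i" using i m sub by auto
    thus ?thesis unfolding \<omega>_def using part_bound[OF fin sub(2) vV _ i(1) _ E] X2_def by auto
  qed simp
  have b3: "card X3 \<le> \<omega> - 1"
  proof (cases "X3 = {}")
    case False
    then have "X1 \<noteq> {}" unfolding X3_def by auto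
    then obtain m where m: "m \<in> X1" "\<forall>x\<in>X1. h x \<le> h m" using X1max by blast
    then obtain i where i: "i<k" "v \<in> S i" "\<forall>z\<in>V. h z \<le> h m \<longrightarrow> z \<in> S i" unfolding X1_def by auto
    have above: "h m < h w" if "w \<in> X3" for w
    proof (rule ccontr)
      assume "\<not> h m < h w"
      have wV: "w \<in> V" "w \<noteq> v" using that unfolding X3_def by auto
      have "\<forall>z\<in>V. h z \<le> h w \<longrightarrow> z \<in> S i" using i(3) \<open>\<not> h m < h w\<close> by auto
      hence "w \<in> X1" unfolding X1_def using wV i(1,2) by blast
      thus False using that unfolding X3_def by auto
    qed
    obtain w3 where w3: "w3 \<in> X3" "\<forall>x\<in>X3. h x \<le> h w3"
    proof -
      have "Max (h ` X3) \<in> h ` X3" using finX False by auto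
      then obtain m where "m \<in> X3" "h m = Max (h ` X3)" by auto
      thus ?thesis using finX(3) that by (metis Max_ge finite_imageI imageI)
    qed
    then obtain j u where ju: "j<k" "u \<in> X1" "h u \<le> h w3" "\<forall>z\<in>V. h u \<le> h z \<and> h z \<le> h w3 \<longrightarrow> z \<in> S j"
      unfolding X3_def by auto
    have "h u \<le> h m" using ju m by auto
    have "insert m X3 \<subseteq> S j"
    proof
      fix z assume "z \<in> insert m X3"
      then show "z \<in> S j"
      proof
        assume "z = m" thus ?thesis using ju m \<open>h u \<le> h m\<close> above w3 sub by (meson less_imp_le subsetD)
      next
        assume z: "z \<in> X3"
        have "h u \<le> h z" using above[OF z] \<open>h u \<le> h m\<close> by simp
        thus ?thesis using ju w3 z sub by auto
      qed
    qed
    moreover have "m \<notin> X3" using m unfolding X3_def by auto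
    ultimately show ?thesis unfolding \<omega>_def using part_bound[OF fin sub(3) _ _ ju(1) _ E] m sub by auto
  qed simp
  have b4: "card X4 \<le> \<omega> - 1"
  proof (cases "X4 = {}")
    case False
    then have "X2 \<noteq> {}" unfolding X4_def by auto
    then obtain m where m: "m \<in> X2" "\<forall>x\<in>X2. h m \<le> h x" using X2min by blast
    then obtain i where i: "i<k" "v \<in> S i" "\<forall>z\<in>V. h m \<le> h z \<longrightarrow> z \<in> S i" unfolding X2_def by auto
    have below: "h w < h m" if "w \<in> X4" for w
    proof (rule ccontr)
      assume "\<not> h w < h m"
      have wV: "w \<in> V" "w \<noteq> v" using that unfolding X4_def by auto
      have "\<forall>z\<in>V. h w \<le> h z \<longrightarrow> z \<in> S i" using i(3) \<open>\<not> h w < h m\<close> by auto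
      hence "w \<in> X2" unfolding X2_def using wV i(1,2) by blast
      thus False using that unfolding X4_def by auto
    qed
    obtain w4 where w4: "w4 \<in> X4" "\<forall>x\<in>X4. h w4 \<le> h x"
    proof -
      have "Min (h ` X4) \<in> h ` X4" using finX False by auto
      then obtain m where "m \<in> X4" "h m = Min (h ` X4)" by auto
      thus ?thesis using finX(4) that by (metis Min_le finite_imageI imageI)
    qed
    then obtain j u where ju: "j<k" "u \<in> X2" "h w4 \<le> h u" "\<forall>z\<in>V. h w4 \<le> h z \<and> h z \<le> h u \<longrightarrow> z \<in> S j"
      unfolding X4_def by auto
    have "h m \<le> h u" using ju m by auto
    have "insert m X4 \<subseteq> S j"
    proof
      fix z assume "z \<in> insert m X4"
      then show "z \<in> S j"
      proof
        assume "z = m" thus ?thesis using ju m \<open>h m \<le> h u\<close> below w4 sub by (meson less_imp_le subsetD)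
      next
        assume z: "z \<in> X4"
        have "h z \<le> h u" using below[OF z] \<open>h m \<le> h u\<close> by simp
        thus ?thesis using ju w4 z sub by auto
      qed
    qed
    moreover have "m \<notin> X4" using m unfolding X4_def by auto
    ultimately show ?thesis unfolding \<omega>_def using part_bound[OF fin sub(4) _ _ ju(1) _ E] m sub by auto
  qed simp
  have A: "w \<in> X1 \<or> w \<in> X2" if wV: "w \<in> V" and Evw: "E v w" for w
  proof -
    obtain i where i: "i<k" "v \<in> S i" "w \<in> S i" and wv: "w \<noteq> v" using Evw unfolding E by auto
    show ?thesis
    proof (cases "\<forall>z\<in>V. h z \<le> h w \<longrightarrow> z \<in> S i")
      case True thus ?thesis using i wV wv unfolding X1_def by auto
    next
      case False
      then obtain z where z: "z \<in> V" "h z \<le> h w" "z \<notin> S i" by auto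
      have "z \<noteq> v" "z \<noteq> w" using z i by auto
      hence zlt: "h v < h z" "h z < h w" using vmin z injD wV by (auto simp: order_le_less)
      have "\<forall>z'\<in>V. h w \<le> h z' \<longrightarrow> z' \<in> S i"
      proof (intro ballI impI, rule ccontr)
        fix z' assume z': "z' \<in> V" "h w \<le> h z'" "z' \<notin> S i"
        hence "z' \<noteq> w" using i by auto
        hence "h w < h z'" using z' injD wV by (auto simp: order_le_less)
        thus False using NA1[OF i(1) vV z(1) wV z'(1) zlt] i z z' by auto
      qed
      thus ?thesis using i wV wv unfolding X2_def by auto
    qed
  qed
  have cover: "{w \<in> V. w \<noteq> v \<and> (E v w \<or> (\<exists>u\<in>V. E v u \<and> E u w))} \<subseteq> X1 \<union> X2 \<union> X3 \<union> X4"
  proof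
    fix w assume "w \<in> {w \<in> V. w \<noteq> v \<and> (E v w \<or> (\<exists>u\<in>V. E v u \<and> E u w))}"
    hence wV: "w \<in> V" and wv: "w \<noteq> v" and d: "E v w \<or> (\<exists>u\<in>V. E v u \<and> E u w)" by auto
    show "w \<in> X1 \<union> X2 \<union> X3 \<union> X4"
    proof (cases "w \<in> X1 \<or> w \<in> X2")
      case True thus ?thesis by auto
    next
      case False
      hence nE: "\<not> E v w" using A wV by blast
      then obtain u where u: "u \<in> V" "E v u" "E u w" using d by auto
      have uv: "u \<noteq> v" using u unfolding E by auto
      obtain j where j: "j<k" "u \<in> S j" "w \<in> S j" and uw: "u \<noteq> w" using u unfolding E by auto
      have vj: "v \<notin> S j" using nE j wv unfolding E by auto
      from A[OF u(1,2)] show ?thesis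
      proof
        assume uX: "u \<in> X1"
        then obtain i where i: "i<k" "v \<in> S i" "\<forall>z\<in>V. h z \<le> h u \<longrightarrow> z \<in> S i" unfolding X1_def by auto
        have "\<not> h w \<le> h u"
        proof
          assume "h w \<le> h u"
          hence "\<forall>z\<in>V. h z \<le> h w \<longrightarrow> z \<in> S i" using i(3) by auto
          hence "w \<in> X1" using i wV wv unfolding X1_def by blast
          thus False using False by auto
        qed
        hence hw: "h u < h w" by simp
        have "\<forall>z\<in>V. h u \<le> h z \<and> h z \<le> h w \<longrightarrow> z \<in> S j"
        proof (intro ballI impI, rule ccontr)
          fix z assume z: "z \<in> V" "h u \<le> h z \<and> h z \<le> h w" "z \<notin> S j"
          hence "z \<noteq> u" "z \<noteq> w" using j by auto
          hence "h u < h z" "h z < h w" using z injD u(1) wV by (auto simp: order_le_less)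
          thus False using NA2[OF j(1) vV u(1) z(1) wV vmin[OF u(1) uv]] j vj z by auto
        qed
        hence "w \<in> X3" using False wV wv j uX less_imp_le[OF hw] unfolding X3_def by blast
        thus ?thesis by blast
      next
        assume uX: "u \<in> X2"
        then obtain i where i: "i<k" "v \<in> S i" "\<forall>z\<in>V. h u \<le> h z \<longrightarrow> z \<in> S i" unfolding X2_def by auto
        have "\<not> h u \<le> h w"
        proof
          assume "h u \<le> h w"
          hence "\<forall>z\<in>V. h w \<le> h z \<longrightarrow> z \<in> S i" using i(3) by auto
          hence "w \<in> X2" using i wV wv unfolding X2_def by blast
          thus False using False by auto
        qed
        hence hw: "h w < h u" by simp
        have "\<forall>z\<in>V. h w \<le> h z \<and> h z \<le> h u \<longrightarrow> z \<in> S j"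
        proof (intro ballI impI, rule ccontr)
          fix z assume z: "z \<in> V" "h w \<le> h z \<and> h z \<le> h u" "z \<notin> S j"
          hence "z \<noteq> u" "z \<noteq> w" using j by auto
          hence "h w < h z" "h z < h u" using z injD u(1) wV by (auto simp: order_le_less)
          thus False using NA2[OF j(1) vV wV z(1) u(1) vmin[OF wV wv]] j vj z by auto
        qed
        hence "w \<in> X4" using False wV wv j uX less_imp_le[OF hw] unfolding X4_def by blast
        thus ?thesis by blast
      qed
    qed
  qed
  have "square_degree V E v \<le> card (X1 \<union> X2 \<union> X3 \<union> X4)"
    unfolding square_degree_def using cover finX by (intro card_mono) auto
  also have "\<dots> \<le> card X1 + card X2 + card X3 + card X4"
    by (metis (no_types, lifting) add_le_mono card_Un_le le_refl order_trans)
  also have "\<dots> \<le> 4 * \<omega> - 4" using b1 b2 b3 b4 by linarith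
  finally show ?thesis unfolding \<omega>_def .
qed


theorem mainTheorem9:
  fixes c :: complex and r :: real and k :: nat
    and F :: "nat \<Rightarrow> complex set" and V :: "complex set" and v :: complex
  assumes "r > 0"
    and "\<And>i. i < k \<Longrightarrow> F i \<subseteq> sphere c r"
    and "\<And>i. i < k \<Longrightarrow> F i homeomorphic {0..1::real}"
    and "finite V" and "V \<subseteq> sphere c r"
    and "v \<in> V"
  shows "square_degree V (circ_interval_adj F k) v
           \<le> 4 * clique_number V (circ_interval_adj F k) - 4"
proof -
  note r = assms(1)
  have vs: "v \<in> sphere c r" using assms(5,6) by auto
  have vc: "v \<noteq> c" using vs r by auto
  have con: "connected (F i)" if "i < k" for i
    using homeomorphic_connectedness[OF assms(3)[OF that]] by simp
  have Vs: "\<And>w. w \<in> V \<Longrightarrow> w \<in> sphere c r" using assms(5) by auto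
  show ?thesis
  proof (rule comb[where h = "\<lambda>w. - ang c v w" and S = F])
    show "finite V" by fact
    show "v \<in> V" by fact
    show "- ang c v v < - ang c v w" if "w \<in> V" "w \<noteq> v" for w
    proof -
      have "ang c v w \<noteq> ang c v v" using ang_inj[OF r vs Vs[OF that(1)] vs] that by auto
      thus ?thesis using ang_self[OF vc] ang_bounds[of c v w] by auto
    qed
    show "inj_on (\<lambda>w. - ang c v w) V"
      by (rule inj_onI) (use ang_inj[OF r vs] Vs in auto)
    show False if "i < k" "a \<in> V" "b \<in> V" "cc \<in> V" "d \<in> V"
      "- ang c v a < - ang c v b" "- ang c v b < - ang c v cc" "- ang c v cc < - ang c v d"
      "a \<in> F i" "cc \<in> F i" "b \<notin> F i" "d \<notin> F i" for i a b cc d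
      by (rule sep[OF r vs assms(2)[OF that(1)] con[OF that(1)] Vs[OF that(5)] Vs[OF that(3)]
            that(12) that(11) that(10) that(9)]) (use that in auto)
    show False if "i < k" "a \<in> V" "b \<in> V" "cc \<in> V" "d \<in> V"
      "- ang c v a < - ang c v b" "- ang c v b < - ang c v cc" "- ang c v cc < - ang c v d"
      "b \<in> F i" "d \<in> F i" "a \<notin> F i" "cc \<notin> F i" for i a b cc d
      by (rule sep[OF r vs assms(2)[OF that(1)] con[OF that(1)] Vs[OF that(4)] Vs[OF that(2)]
            that(12) that(11) that(9) that(10)]) (use that in auto)
    show "circ_interval_adj F k = (\<lambda>x y. x \<noteq> y \<and> (\<exists>i<k. x \<in> F i \<and> y \<in> F i))"
      by (intro ext) (simp add: circ_interval_adj_def)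
  qed
qed

end
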